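(* Let $b\geq 1$ be odd, let $n,k$ be positive integers with $k\leq n-2$, and let $\mathbf{s}=s_1\ldots s_k$ be an integer sequence such that the set $\mathbf{s}\,|\,R_n(b)$ is nonempty. Let $\mathbf{t}$ be the $\prec$-last sequence in $\mathbf{s}\,|\,R_n(b)$, and let $M=\min\{b,\max\{s_i\}_{i=1}^k+1\}$. Then: (1) if $\sum_{i=1}^k s_i$ is even and $M$ is odd, then $\mathbf{t}=\mathbf{s}M0\ldots0$; (2) if $\sum_{i=1}^k s_i$ is even and $M$ is even, then $\mathbf{t}=\mathbf{s}M(M+1)0\ldots0$; (3) if $\sum_{i=1}^k s_i$ is odd, then $\mathbf{t}=\mathbf{s}0\ldots0$. (In each case the trailing zeros fill the sequence up to length $n$.)
   Context: A restricted growth function of length $n$ is an integer sequence $s_1\ldots s_n$ with $s_1=0$ and $0\leq s_{i+1}\leq \max\{s_j\}_{j=1}^i+1$ for $1\leq i\leq n-1$; $R_n$ is the set of these. For an integer $b\geq1$, $R_n(b)=\{s_1\ldots s_n\in R_n: \max_i s_i\leq b\}$. For a sequence $\mathbf{u}$ and a set $S$ of sequences, $\mathbf{u}\,|\,S$ denotes the subset of $S$ of sequences having prefix $\mathbf{u}$. The Reflected Gray Code Order $\prec$ on length-$n$ sequences of nonnegative integers: $s_1\ldots s_n\prec t_1\ldots t_n$ if, for the smallest $k$ with $s_k\neq t_k$, either $\sum_{i=1}^{k-1}s_i$ is even and $s_k<t_k$, or $\sum_{i=1}^{k-1}s_i$ is odd and $s_k>t_k$. The $\prec$-last sequence of a set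 is its largest element with respect to $\prec$. *)

theory Defs
  imports Main
begin

text \<open>Sequences s_1 ... s_n are integer lists; position i (1-based) is index i-1.\<close>

definition is_rgf :: "int list \<Rightarrow> bool" where
  "is_rgf xs \<longleftrightarrow> xs \<noteq> [] \<and> xs ! 0 = 0 \<and>
     (\<forall>i. 0 < i \<and> i < length xs \<longrightarrow> 0 \<le> xs ! i \<and> xs ! i \<le> Max (set (take i xs)) + 1)"

definition RGF :: "nat \<Rightarrow> int list set" where
  "RGF n = {xs. length xs = n \<and> is_rgf xs}"

definition RGF_b :: "nat \<Rightarrow> nat \<Rightarrow> int list set" where
  "RGF_b n b = {xs \<in> RGF n. \<forall>x \<in> set xs. x \<le> int b}"

definition prefix_restrict :: "int list \<Rightarrow> int list set \<Rightarrow> int list set" where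
  "prefix_restrict u S = {xs \<in> S. take (length u) xs = u}"

definition gray_less :: "int list \<Rightarrow> int list \<Rightarrow> bool" where
  "gray_less xs ys \<longleftrightarrow> length xs = length ys \<and>
     (\<exists>k < length xs. take k xs = take k ys \<and> xs ! k \<noteq> ys ! k \<and>
        ((even (sum_list (take k xs)) \<and> xs ! k < ys ! k) \<or>
         (odd (sum_list (take k xs)) \<and> xs ! k > ys ! k)))"

definition is_gray_last :: "int list set \<Rightarrow> int list \<Rightarrow> bool" where
  "is_gray_last S t \<longleftrightarrow> t \<in> S \<and> (\<forall>u \<in> S. u \<noteq> t \<longrightarrow> gray_less u t)"

end

theory Submission
  imports Defs
begin

lemma gl_asym: "gray_less x y \<Longrightarrow> \<not> gray_less y x"
proof
  assume a: "gray_less x y" and b: "gray_less y x"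
  from a obtain i where i: "i < length x" "take i x = take i y" "x!i \<noteq> y!i"
    "(even (sum_list (take i x)) \<and> x ! i < y ! i) \<or> (odd (sum_list (take i x)) \<and> x ! i > y ! i)"
    and l: "length x = length y" unfolding gray_less_def by blast
  from b obtain j where j: "j < length y" "take j y = take j x" "y!j \<noteq> x!j"
    "(even (sum_list (take j y)) \<and> y ! j < x ! j) \<or> (odd (sum_list (take j y)) \<and> y ! j > x ! j)"
    unfolding gray_less_def by blast
  have "\<not> i < j"
  proof
    assume "i < j" then have "take j y ! i = take j x ! i" using j by simp
    then show False using \<open>i<j\<close> i by simp
  qed
  moreover have "\<not> j < i"
  proof
    assume "j < i" then have "take i x ! j = take i y ! j" using i by simp
    then show False using \<open>j<i\<close> j by simp
  qed
  ultimately have "i = j" by simp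
  then have e: "sum_list (take j y) = sum_list (take i x)" using i(2) by simp
  show False using i(4) j(4) unfolding e \<open>i = j\<close> by auto
qed

lemma last_unique:
  assumes "c \<in> S" "\<forall>u\<in>S. u \<noteq> c \<longrightarrow> gray_less u c" "is_gray_last S t"
  shows "t = c"
proof (rule ccontr)
  assume "t \<noteq> c"
  then have "gray_less t c" "gray_less c t" using assms unfolding is_gray_last_def by auto
  then show False using gl_asym by blast
qed

lemma first_diff:
  assumes "length u = length c" "u \<noteq> c"
  shows "\<exists>j<length c. take j u = take j c \<and> u!j \<noteq> c!j"
proof -
  have ex: "\<exists>i. i < length c \<and> u!i \<noteq> c!i"
  proof (rule ccontr)
    assume "\<not> ?thesis"
    then have "u = c" using assms(1) by (simp add: list_eq_iff_nth_eq)
    then show False using assms(2) by simp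
  qed
  define P where "P = (\<lambda>i. i < length c \<and> u!i \<noteq> c!i)"
  define j where "j = (LEAST i. P i)"
  have j: "P j" using LeastI_ex[of P] ex unfolding j_def P_def by blast
  have lt: "\<not> P i" if "i < j" for i using not_less_Least[of i P] that unfolding j_def by blast
  have "take j u = take j c"
  proof (rule nth_equalityI)
    show "length (take j u) = length (take j c)" using assms(1) by simp
    fix i assume "i < length (take j u)"
    then have "i < j" "i < length c" using assms(1) by auto
    then show "take j u ! i = take j c ! i" using lt[of i] unfolding P_def by simp
  qed
  then show ?thesis using j unfolding P_def by blast
qed

lemma gl_intro:
  assumes "length u = length c" "j < length c" "take j u = take j c" "u!j \<noteq> c!j"
    "(even (sum_list (take j c)) \<and> u!j < c!j) \<or> (odd (sum_list (take j c)) \<and> u!j > c!j)"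
  shows "gray_less u c"
  unfolding gray_less_def using assms by (metis)

lemma rgf_app:
  assumes "s \<noteq> []" "s!0 = 0"
    "\<forall>i. 0<i \<and> i<length s \<longrightarrow> 0 \<le> s!i \<and> s!i \<le> Max(set(take i s))+1"
    "\<forall>i<length r. 0 \<le> r!i \<and> r!i \<le> Max(set(take (length s + i) (s@r)))+1"
  shows "is_rgf (s@r)"
proof -
  have "0 \<le> (s @ r) ! i \<and> (s @ r) ! i \<le> Max (set (take i (s @ r))) + 1"
    if i: "0 < i \<and> i < length (s @ r)" for i
  proof (cases "i < length s")
    case True then show ?thesis using assms(3) i by (simp add: nth_append)
  next
    case False
    then obtain m where m: "i = length s + m" by (metis le_Suc_ex not_less)
    then have "m < length r" using i by simp
    then show ?thesis using assms(4) m by (simp add: nth_append)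
  qed
  then show ?thesis unfolding is_rgf_def using assms by (simp add: nth_append)
qed

lemma mem_facts:
  assumes "u \<in> prefix_restrict s (RGF_b n b)"
  shows "length u = n" "take (length s) u = s" "\<forall>i<n. 0 \<le> u!i \<and> u!i \<le> int b"
    "\<forall>i. 0<i \<and> i<n \<longrightarrow> u!i \<le> Max(set(take i u))+1" "u \<noteq> []" "u!0 = 0"
proof -
  have u: "length u = n" "is_rgf u" "\<forall>x\<in>set u. x \<le> int b" "take (length s) u = s"
    using assms unfolding prefix_restrict_def RGF_b_def RGF_def by auto
  show "length u = n" "take (length s) u = s" by (fact u(1), fact u(4))
  show "u \<noteq> []" "u!0 = 0" using u(2) unfolding is_rgf_def by auto
  show "\<forall>i. 0<i \<and> i<n \<longrightarrow> u!i \<le> Max(set(take i u))+1"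
    using u(1,2) unfolding is_rgf_def by auto
  show "\<forall>i<n. 0 \<le> u!i \<and> u!i \<le> int b"
  proof (intro allI impI)
    fix i assume "i < n"
    then have "u!i \<in> set u" using u(1) by simp
    moreover have "0 \<le> u!i" using u(1,2) \<open>i<n\<close> unfolding is_rgf_def by (cases "i = 0") auto
    ultimately show "0 \<le> u!i \<and> u!i \<le> int b" using u(3) by auto
  qed
qed

lemma sum_rep0[simp]: "sum_list (replicate m (0::int)) = 0"
  by (induct m) auto

lemma Max_app: "s \<noteq> [] \<Longrightarrow> Max (set s) \<le> Max (set (s @ ys :: int list))"
  by (simp add: Max_mono)

lemma jge:
  assumes "take k u = s" "take k c = s" "j < length c" "length u = length c" "u!j \<noteq> c!j"
  shows "k \<le> j"
proof (rule ccontr)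
  assume "\<not> k \<le> j"
  then have "u ! j = take k u ! j" "c ! j = take k c ! j" by simp_all
  then show False using assms(1,2,5) by simp
qed

theorem proposition1:
  fixes b n k :: nat and s t :: "int list"
  assumes "b \<ge> 1" and "odd b"
    and "n > 0" and "k > 0" and "k \<le> n - 2"
    and "length s = k"
    and "prefix_restrict s (RGF_b n b) \<noteq> {}"
    and "is_gray_last (prefix_restrict s (RGF_b n b)) t"
  defines "M \<equiv> min (int b) (Max (set s) + 1)"
  shows "(even (sum_list s) \<and> odd M \<longrightarrow> t = s @ [M] @ replicate (n - k - 1) 0)
       \<and> (even (sum_list s) \<and> even M \<longrightarrow> t = s @ [M, M + 1] @ replicate (n - k - 2) 0)
       \<and> (odd (sum_list s) \<longrightarrow> t = s @ replicate (n - k) 0)"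
proof -
  let ?S = "prefix_restrict s (RGF_b n b)"
  obtain w where w: "w \<in> ?S" using assms(7) by blast
  note wf = mem_facts[OF w]
  have nk: "k + 2 \<le> n" using assms(4,5) by linarith
  have sne: "s \<noteq> []" using assms(4,6) by auto
  have ws: "\<forall>i<k. w!i = s!i" using wf(2) assms(6) by (metis nth_take)
  have s0: "s!0 = 0" using ws wf(6) assms(4) by auto
  have sb: "\<forall>x\<in>set s. 0 \<le> x \<and> x \<le> int b"
  proof
    fix x assume "x \<in> set s"
    then obtain i where "i < k" "s!i = x" using assms(6) by (auto simp: in_set_conv_nth)
    then have "w!i = x" "i < n" using ws nk by auto
    then show "0 \<le> x \<and> x \<le> int b" using wf(3) by force
  qed
  have srgf: "\<forall>i. 0<i \<and> i<length s \<longrightarrow> 0 \<le> s!i \<and> s!i \<le> Max(set(take i s))+1"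
  proof (intro allI impI)
    fix i assume i: "0<i \<and> i<length s"
    have ik: "i < k" "i < n" using i assms(6) nk by auto
    have "take i s = take i (take k w)" using wf(2) assms(6) by simp
    also have "\<dots> = take i w" using ik by (simp add: min_absorb1)
    finally have tw: "take i s = take i w" .
    have sw: "s!i = w!i" using ws ik by simp
    have "0 \<le> w!i" using wf(3) ik by blast
    moreover have "w!i \<le> Max(set(take i w))+1" using wf(4) ik i by blast
    ultimately show "0 \<le> s!i \<and> s!i \<le> Max(set(take i s))+1" using tw sw by simp
  qed
  have Ms0: "Max (set s) \<ge> 0" using s0 sne by (metis Max_ge finite_set nth_mem length_greater_0_conv)
  have Msb: "Max (set s) \<le> int b" using sb sne by simp
  have M0: "0 \<le> M" "M \<le> int b" "M \<le> Max (set s) + 1" "Max (set s) \<le> M"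
    unfolding M_def using Ms0 Msb by auto
  have uk: "u!k \<le> M" if "u \<in> ?S" for u
  proof -
    note uf = mem_facts[OF that]
    have "take k u = s" using uf(2) assms(6) by simp
    then have "u!k \<le> Max (set s) + 1" using uf(4) assms(4) nk by force
    moreover have "u!k \<le> int b" using uf(3) nk by simp
    ultimately show ?thesis unfolding M_def by simp
  qed
  have ukk: "take k u = s" if "u \<in> ?S" for u using mem_facts(2)[OF that] assms(6) by simp
  have C3: "t = s @ replicate (n - k) 0" if odd: "odd (sum_list s)"
  proof -
    define c where "c = s @ replicate (n - k) (0::int)"
    have lc: "length c = n" unfolding c_def using assms(6) nk by simp
    have tc: "take k c = s" unfolding c_def using assms(6) by simp
    have cS: "c \<in> ?S"
    proof -
      have "is_rgf c" unfolding c_def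
      proof (rule rgf_app[OF sne s0 srgf], intro allI impI conjI)
        fix i assume ilt: "i < length (replicate (n - k) (0::int))"
        show "0 \<le> replicate (n - k) (0::int) ! i" using ilt by simp
        have "0 \<le> Max (set (take (length s + i) (s @ replicate (n - k) 0)))"
          using Ms0 Max_app[OF sne, of "take i (replicate (n - k) 0)"] by simp
        then show "replicate (n - k) 0 ! i \<le> Max (set (take (length s + i) (s @ replicate (n - k) 0))) + 1"
          using ilt by simp
      qed
      moreover have "\<forall>x\<in>set c. x \<le> int b" unfolding c_def using sb by auto
      ultimately show ?thesis using lc tc assms(6) unfolding prefix_restrict_def RGF_b_def RGF_def by simp
    qed
    have "gray_less u c" if uS: "u \<in> ?S" and ne: "u \<noteq> c" for u
    proof -
      have lu: "length u = length c" using mem_facts(1)[OF uS] lc by simp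
      obtain j where j: "j < length c" "take j u = take j c" "u!j \<noteq> c!j"
        using first_diff[OF lu ne] by blast
      have kj: "k \<le> j" using jge[OF ukk[OF uS] tc j(1) lu j(3)] .
      have cj: "c!j = 0" unfolding c_def using kj j(1) lc assms(6) by (simp add: nth_append)
      have sj: "sum_list (take j c) = sum_list s" unfolding c_def using kj assms(6) by simp
      have "0 \<le> u!j" using mem_facts(3)[OF uS] j(1) lc by simp
      then show ?thesis using gl_intro[OF lu j] cj sj odd j(3) by simp
    qed
    then show ?thesis using last_unique[OF cS _ assms(8)] unfolding c_def by blast
  qed
  have C1: "t = s @ [M] @ replicate (n - k - 1) 0" if ev: "even (sum_list s)" and oM: "odd M"
  proof -
    define r where "r = M # replicate (n - k - 1) (0::int)"
    define c where "c = s @ r"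
    have lc: "length c = n" unfolding c_def r_def using assms(6) nk by simp
    have tc: "take k c = s" unfolding c_def using assms(6) by simp
    have cS: "c \<in> ?S"
    proof -
      have "is_rgf c" unfolding c_def
      proof (rule rgf_app[OF sne s0 srgf], intro allI impI conjI)
        fix i assume i: "i < length r"
        have mx: "Max (set s) \<le> Max (set (take (length s + i) (s @ r)))"
          using Max_app[OF sne, of "take i r"] by simp
        show "0 \<le> r ! i" unfolding r_def using M0 i r_def by (auto simp: nth_Cons')
        show "r ! i \<le> Max (set (take (length s + i) (s @ r))) + 1"
        proof (cases i)
          case 0 then show ?thesis unfolding r_def using M0 by simp
        next
          case (Suc m) then show ?thesis unfolding r_def using i mx Ms0 unfolding r_def by simp
        qed
      qed
      moreover have "\<forall>x\<in>set c. x \<le> int b" unfolding c_def r_def using sb M0 by auto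
      ultimately show ?thesis using lc tc assms(6) unfolding prefix_restrict_def RGF_b_def RGF_def by simp
    qed
    have "gray_less u c" if uS: "u \<in> ?S" and ne: "u \<noteq> c" for u
    proof -
      have lu: "length u = length c" using mem_facts(1)[OF uS] lc by simp
      obtain j where j: "j < length c" "take j u = take j c" "u!j \<noteq> c!j"
        using first_diff[OF lu ne] by blast
      have kj: "k \<le> j" using jge[OF ukk[OF uS] tc j(1) lu j(3)] .
      show ?thesis
      proof (cases "j = k")
        case True
        have cj: "c!j = M" unfolding c_def r_def using True assms(6) by (simp add: nth_append)
        have sj: "sum_list (take j c) = sum_list s" using tc True by simp
        have "u!j \<le> M" using uk[OF uS] True by simp
        then show ?thesis using gl_intro[OF lu j] cj sj ev j(3) by simp
      next
        case False
        then obtain m where m: "j = Suc k + m" using kj by (metis le_Suc_ex le_neq_implies_less Suc_le_eq le_less)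
        have cj: "c!j = 0" unfolding c_def r_def using m j(1) lc assms(6) by (simp add: nth_append)
        have sj: "sum_list (take j c) = sum_list s + M" unfolding c_def r_def using m assms(6) by simp
        have "0 \<le> u!j" using mem_facts(3)[OF uS] j(1) lc by simp
        then show ?thesis using gl_intro[OF lu j] cj sj ev oM j(3) by simp
      qed
    qed
    then show ?thesis using last_unique[OF cS _ assms(8)] unfolding c_def r_def by simp
  qed
  have C2: "t = s @ [M, M + 1] @ replicate (n - k - 2) 0" if ev: "even (sum_list s)" and eM: "even M"
  proof -
    have Mb: "M < int b" using M0 eM assms(2) by (metis even_of_nat order_le_less)
    then have MM: "M = Max (set s) + 1" unfolding M_def by simp
    define r where "r = M # (M + 1) # replicate (n - k - 2) (0::int)"
    define c where "c = s @ r"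
    have lc: "length c = n" unfolding c_def r_def using assms(6) nk by simp
    have tc: "take k c = s" unfolding c_def using assms(6) by simp
    have tc1: "take (Suc k) c = s @ [M]" unfolding c_def r_def using assms(6) by simp
    have Msm: "Max (set (s @ [M])) = M" using MM sne by (simp add: Max_insert)
    have cS: "c \<in> ?S"
    proof -
      have "is_rgf c" unfolding c_def
      proof (rule rgf_app[OF sne s0 srgf], intro allI impI conjI)
        fix i assume i: "i < length r"
        have mx: "Max (set s) \<le> Max (set (take (length s + i) (s @ r)))"
          using Max_app[OF sne, of "take i r"] by simp
        show "0 \<le> r ! i" unfolding r_def using M0 i r_def by (auto simp: nth_Cons')
        show "r ! i \<le> Max (set (take (length s + i) (s @ r))) + 1"
        proof (cases "i = 0 \<or> i = 1")
          case True
          moreover have "take (length s + 1) (s @ r) = s @ [M]" unfolding r_def by simp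
          ultimately show ?thesis unfolding r_def using M0 Msm by auto
        next
          case False
          then have i2: "i - 2 < n - Suc (Suc k)" using i unfolding r_def by (simp; linarith)
          then have "r ! i = 0" using False unfolding r_def by (simp add: nth_Cons' numeral_2_eq_2)
          then show ?thesis using mx Ms0 by simp
        qed
      qed
      moreover have "\<forall>x\<in>set c. x \<le> int b" unfolding c_def r_def using sb M0 Mb by auto
      ultimately show ?thesis using lc tc assms(6) unfolding prefix_restrict_def RGF_b_def RGF_def by simp
    qed
    have "gray_less u c" if uS: "u \<in> ?S" and ne: "u \<noteq> c" for u
    proof -
      have lu: "length u = length c" using mem_facts(1)[OF uS] lc by simp
      obtain j where j: "j < length c" "take j u = take j c" "u!j \<noteq> c!j"
        using first_diff[OF lu ne] by blast
      have kj: "k \<le> j" using jge[OF ukk[OF uS] tc j(1) lu j(3)] .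
      consider "j = k" | "j = Suc k" | m where "j = Suc (Suc k) + m" using kj
        by (metis add_Suc le_Suc_ex le_antisym not_less_eq_eq plus_nat.add_0 add_Suc_right)
      then show ?thesis
      proof cases
        case 1
        have cj: "c!j = M" unfolding c_def r_def using 1 assms(6) by (simp add: nth_append)
        have sj: "sum_list (take j c) = sum_list s" using tc 1 by simp
        have "u!j \<le> M" using uk[OF uS] 1 by simp
        then show ?thesis using gl_intro[OF lu j] cj sj ev j(3) by simp
      next
        case 2
        have cj: "c!j = M + 1" unfolding c_def r_def using 2 assms(6) by (simp add: nth_append)
        have sj: "sum_list (take j c) = sum_list s + M" using tc1 2 by simp
        have "u!j \<le> Max (set (take j u)) + 1" using mem_facts(4)[OF uS] j(1) lc 2 by simp
        then have "u!j \<le> M + 1" using j(2) tc1 2 Msm by simp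
        then show ?thesis using gl_intro[OF lu j] cj sj ev eM j(3) by simp
      next
        case 3
        have cj: "c!j = 0" unfolding c_def r_def using 3 j(1) lc assms(6) by (simp add: nth_append)
        have sj: "sum_list (take j c) = sum_list s + (2 * M + 1)" unfolding c_def r_def using 3 assms(6) by simp
        have "0 \<le> u!j" using mem_facts(3)[OF uS] j(1) lc by simp
        then show ?thesis using gl_intro[OF lu j] cj sj ev j(3) by simp
      qed
    qed
    then show ?thesis using last_unique[OF cS _ assms(8)] unfolding c_def r_def by simp
  qed
  show ?thesis using C1 C2 C3 by blast
qed

end
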